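(* Let $(X,d)$ be a finite metric space. Consider sequences $G_0,G_1,\dots,G_k$ of graphs on vertex set $X$ where $G_0$ is the complete graph on $X$ and each $G_{i+1}$ is obtained from $G_i$ through a $d$-erasure. If such a sequence is maximal (i.e. $G_k$ admits no $d$-erasure), then $G_k$ is a minimum spanning tree of $(X,d)$. Moreover, every minimum spanning tree of $(X,d)$ arises as the final graph $G_k$ of some such maximal sequence.
   Context: All graphs are finite, undirected, simple; edges $xy$ are weighted by $d(xy)=d(x,y)$. A minimum spanning tree of $(X,d)$ is a spanning tree of the complete graph on $X$ minimizing the sum of the weights of its edges. A facet edge of $G$ is an edge $xy$ such that $\{x,y\}$ is a maximal clique of $G$. An edge of $G$ is exposed if it is contained in a unique maximal clique of $G$ and it is not a facet edge. For graphs $G,H$ on vertex set $X$, $H$ is obtained from $G$ through a $d$-erasure if $H=G-e$ for an exposed edge $e$ of $G$ such that $d(e)\ge d(e')$ for every exposed edge $e'$ of $G$. *)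

theory Defs
  imports "HOL-Analysis.Abstract_Metric_Spaces"
begin

text \<open>Simple graphs on a vertex set X are represented by their edge sets:
  sets of 2-element subsets of X.\<close>

definition all_pairs :: "'a set \<Rightarrow> 'a set set" where
  "all_pairs X = {{x, y} | x y. x \<in> X \<and> y \<in> X \<and> x \<noteq> y}"

definition complete_graph :: "'a set \<Rightarrow> 'a set set" where
  "complete_graph X = all_pairs X"

definition is_graph_on :: "'a set \<Rightarrow> 'a set set \<Rightarrow> bool" where
  "is_graph_on X E \<longleftrightarrow> E \<subseteq> all_pairs X"

definition clique :: "'a set \<Rightarrow> 'a set set \<Rightarrow> 'a set \<Rightarrow> bool" where
  "clique X E C \<longleftrightarrow> C \<subseteq> X \<and> (\<forall>x\<in>C. \<forall>y\<in>C. x \<noteq> y \<longrightarrow> {x, y} \<in> E)"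

definition maximal_clique :: "'a set \<Rightarrow> 'a set set \<Rightarrow> 'a set \<Rightarrow> bool" where
  "maximal_clique X E C \<longleftrightarrow> clique X E C \<and> (\<forall>C'. clique X E C' \<and> C \<subseteq> C' \<longrightarrow> C' = C)"

definition facet_edge :: "'a set \<Rightarrow> 'a set set \<Rightarrow> 'a set \<Rightarrow> bool" where
  "facet_edge X E e \<longleftrightarrow> e \<in> E \<and> maximal_clique X E e"

definition exposed_edge :: "'a set \<Rightarrow> 'a set set \<Rightarrow> 'a set \<Rightarrow> bool" where
  "exposed_edge X E e \<longleftrightarrow> e \<in> E \<and> (\<exists>!C. maximal_clique X E C \<and> e \<subseteq> C) \<and> \<not> facet_edge X E e"

definition d_erasure :: "'a set \<Rightarrow> ('a \<Rightarrow> 'a \<Rightarrow> real) \<Rightarrow> 'a set set \<Rightarrow> 'a set set \<Rightarrow> bool" where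
  "d_erasure X d G H \<longleftrightarrow>
     (\<exists>x y. H = G - {{x, y}} \<and> exposed_edge X G {x, y} \<and>
        (\<forall>u v. exposed_edge X G {u, v} \<longrightarrow> d u v \<le> d x y))"

text \<open>Weight of an edge {x,y}: d x y (well defined for symmetric d).\<close>
definition edge_weight :: "('a \<Rightarrow> 'a \<Rightarrow> real) \<Rightarrow> 'a set \<Rightarrow> real" where
  "edge_weight d e = (THE r. \<exists>x y. e = {x, y} \<and> r = d x y)"

definition adjacent :: "'a set set \<Rightarrow> 'a \<Rightarrow> 'a \<Rightarrow> bool" where
  "adjacent E x y \<longleftrightarrow> {x, y} \<in> E \<and> x \<noteq> y"

definition connected_graph :: "'a set \<Rightarrow> 'a set set \<Rightarrow> bool" where
  "connected_graph X E \<longleftrightarrow> (\<forall>x\<in>X. \<forall>y\<in>X. (adjacent E)\<^sup>*\<^sup>* x y)"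

definition is_cycle :: "'a set set \<Rightarrow> 'a list \<Rightarrow> bool" where
  "is_cycle E vs \<longleftrightarrow> length vs \<ge> 3 \<and> distinct vs \<and>
     (\<forall>i < length vs - 1. adjacent E (vs ! i) (vs ! (i + 1))) \<and>
     adjacent E (last vs) (hd vs)"

definition acyclic_graph :: "'a set set \<Rightarrow> bool" where
  "acyclic_graph E \<longleftrightarrow> (\<nexists>vs. is_cycle E vs)"

definition spanning_tree :: "'a set \<Rightarrow> 'a set set \<Rightarrow> bool" where
  "spanning_tree X T \<longleftrightarrow> is_graph_on X T \<and> connected_graph X T \<and> acyclic_graph T"

definition minimum_spanning_tree :: "'a set \<Rightarrow> ('a \<Rightarrow> 'a \<Rightarrow> real) \<Rightarrow> 'a set set \<Rightarrow> bool" where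
  "minimum_spanning_tree X d T \<longleftrightarrow> spanning_tree X T \<and>
     (\<forall>T'. spanning_tree X T' \<longrightarrow> (\<Sum>e\<in>T. edge_weight d e) \<le> (\<Sum>e\<in>T'. edge_weight d e))"

definition erasure_sequence :: "'a set \<Rightarrow> ('a \<Rightarrow> 'a \<Rightarrow> real) \<Rightarrow> 'a set set list \<Rightarrow> bool" where
  "erasure_sequence X d Gs \<longleftrightarrow> Gs \<noteq> [] \<and> hd Gs = complete_graph X \<and>
     (\<forall>i < length Gs - 1. d_erasure X d (Gs ! i) (Gs ! (i + 1)))"

definition maximal_erasure_sequence :: "'a set \<Rightarrow> ('a \<Rightarrow> 'a \<Rightarrow> real) \<Rightarrow> 'a set set list \<Rightarrow> bool" where
  "maximal_erasure_sequence X d Gs \<longleftrightarrow> erasure_sequence X d Gs \<and>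
     \<not> (\<exists>H. d_erasure X d (last Gs) H)"

end

theory Submission
  imports Defs
begin


definition nb :: "'a set set \<Rightarrow> 'a set \<Rightarrow> 'a \<Rightarrow> 'a set" where
  "nb E S v = {u \<in> S. u \<noteq> v \<and> {u, v} \<in> E}"
definition clq :: "'a set set \<Rightarrow> 'a set \<Rightarrow> bool" where
  "clq E Y \<longleftrightarrow> (\<forall>p\<in>Y. \<forall>q\<in>Y. p \<noteq> q \<longrightarrow> {p, q} \<in> E)"
definition simpl :: "'a set set \<Rightarrow> 'a set \<Rightarrow> 'a \<Rightarrow> bool" where
  "simpl E S v \<longleftrightarrow> v \<in> S \<and> clq E (nb E S v)"
definition HS :: "'a set set \<Rightarrow> 'a set \<Rightarrow> bool" where
  "HS E X \<longleftrightarrow> (\<forall>S. S \<subseteq> X \<longrightarrow> S \<noteq> {} \<longrightarrow> (\<exists>v. simpl E S v))"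
definition cn :: "'a set \<Rightarrow> 'a set set \<Rightarrow> 'a \<Rightarrow> 'a \<Rightarrow> 'a set" where
  "cn S E x y = {z \<in> S. z \<noteq> x \<and> z \<noteq> y \<and> {x, z} \<in> E \<and> {y, z} \<in> E}"
definition expS :: "'a set set \<Rightarrow> 'a set \<Rightarrow> 'a \<Rightarrow> 'a \<Rightarrow> bool" where
  "expS E S x y \<longleftrightarrow> x \<in> S \<and> y \<in> S \<and> x \<noteq> y \<and> {x, y} \<in> E \<and> cn S E x y \<noteq> {} \<and> clq E (cn S E x y)"

lemma cn_sym: "cn S E a b = cn S E b a"
  unfolding cn_def by auto

lemma HS_mono: "HS E X \<Longrightarrow> S \<subseteq> X \<Longrightarrow> HS E S"
  unfolding HS_def by blast

lemma dirac:
  assumes "finite S" "HS E S" "\<not> clq E S"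
  shows "\<exists>a b. simpl E S a \<and> simpl E S b \<and> a \<noteq> b \<and> {a, b} \<notin> E"
  using assms
proof (induction S rule: finite_psubset_induct)
  case (psubset S)
  have "S \<noteq> {}" using psubset.prems unfolding clq_def by auto
  then obtain v where v: "simpl E S v" using psubset.prems unfolding HS_def by blast
  define S' where "S' = S - {v}"
  have vS: "v \<in> S" using v by (simp add: simpl_def)
  have sub: "S' \<subset> S" using vS S'_def by auto
  have HS': "HS E S'" using HS_mono[OF psubset.prems(1)] S'_def by auto
  show ?case
  proof (cases "clq E S'")
    case True
    from psubset.prems(2) obtain p q where pq: "p \<in> S" "q \<in> S" "p \<noteq> q" "{p,q} \<notin> E"
      unfolding clq_def by blast
    have "\<exists>a. a \<in> S' \<and> {a, v} \<notin> E"
    proof (cases "p = v")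
      case True thus ?thesis using pq S'_def by (auto simp: insert_commute)
    next
      case False
      hence "q = v" using True pq S'_def unfolding clq_def by auto
      thus ?thesis using pq False S'_def by auto
    qed
    then obtain a where a: "a \<in> S'" "{a, v} \<notin> E" by blast
    have "nb E S a \<subseteq> S'" using a S'_def unfolding nb_def by (auto simp: insert_commute)
    hence "simpl E S a" using True a S'_def unfolding simpl_def clq_def by auto
    moreover have "a \<noteq> v" using a S'_def by auto
    ultimately show ?thesis using v a by (metis insert_commute)
  next
    case False
    from psubset.IH[OF sub HS' False] obtain a b where
      ab: "simpl E S' a" "simpl E S' b" "a \<noteq> b" "{a, b} \<notin> E" by blast
    have aS': "a \<in> S'" "b \<in> S'" using ab by (simp_all add: simpl_def)
    have "\<not> ({a, v} \<in> E \<and> {b, v} \<in> E)"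
    proof
      assume "{a, v} \<in> E \<and> {b, v} \<in> E"
      hence "a \<in> nb E S v" "b \<in> nb E S v" using aS' S'_def unfolding nb_def by auto
      thus False using v ab unfolding simpl_def clq_def by auto
    qed
    then obtain c where c: "simpl E S' c" "{c, v} \<notin> E" "c \<in> S'" using ab aS' by blast
    have "nb E S c = nb E S' c" using c S'_def unfolding nb_def by (auto simp: insert_commute)
    hence "simpl E S c" using c S'_def unfolding simpl_def by auto
    moreover have "c \<noteq> v" using c S'_def by auto
    ultimately show ?thesis using v c by (metis insert_commute)
  qed
qed

lemma HS_erase:
  assumes fin: "finite X" and hs: "HS E X" and ex: "expS E X x y"
  shows "HS (E - {{x, y}}) X"
  unfolding HS_def
proof (intro allI impI)
  fix S assume SX: "S \<subseteq> X" and ne: "S \<noteq> {}"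
  let ?H = "E - {{x, y}}"
  have xy: "x \<noteq> y" "x \<in> X" "y \<in> X" using ex by (auto simp: expS_def)
  have cnq: "clq E (cn X E x y)" using ex by (simp add: expS_def)
  have good: "simpl ?H S v" if sv: "simpl E S v" and
     nv: "v = x \<or> v = y \<or> \<not> ({x, v} \<in> E \<and> {y, v} \<in> E)" for v
  proof -
    have vS: "v \<in> S" using sv by (simp add: simpl_def)
    have c: "clq E (nb E S v)" using sv by (simp add: simpl_def)
    have "nb ?H S v \<subseteq> nb E S v" by (auto simp: nb_def)
    moreover have "{p, q} \<noteq> {x, y}" if "p \<in> nb ?H S v" "q \<in> nb ?H S v" "p \<noteq> q" for p q
    proof
      assume pq: "{p, q} = {x, y}"
      have pv: "p \<noteq> v" "q \<noteq> v" "{p, v} \<in> E" "{q, v} \<in> E" "{p,v} \<noteq> {x,y}" "{q,v} \<noteq> {x,y}"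
        using that by (auto simp: nb_def)
      from pq have "(p = x \<and> q = y) \<or> (p = y \<and> q = x)" by (auto simp: doubleton_eq_iff)
      thus False using nv pv by (auto simp: insert_commute)
    qed
    ultimately show ?thesis using c vS unfolding simpl_def clq_def by blast
  qed
  show "\<exists>v. simpl ?H S v"
  proof (cases "x \<in> S \<and> y \<in> S")
    case False
    obtain v where v: "simpl E S v" using hs SX ne unfolding HS_def by blast
    have "nb ?H S v = nb E S v" using False v by (auto simp: nb_def simpl_def doubleton_eq_iff)
    moreover have "\<forall>p\<in>nb E S v. \<forall>q\<in>nb E S v. {p,q} \<noteq> {x,y}" using False by (auto simp: nb_def doubleton_eq_iff)
    ultimately have "simpl ?H S v" using v unfolding simpl_def clq_def by auto
    thus ?thesis by blast
  next
    case True
    show ?thesis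
    proof (cases "clq E S")
      case cq: True
      have "simpl E S x" using cq True unfolding simpl_def clq_def nb_def by auto
      thus ?thesis using good by blast
    next
      case False
      obtain a b where ab: "simpl E S a" "simpl E S b" "a \<noteq> b" "{a, b} \<notin> E"
        using dirac[OF finite_subset[OF SX fin] HS_mono[OF hs SX] False] by blast
      have "\<not> ((a \<noteq> x \<and> a \<noteq> y \<and> {x, a} \<in> E \<and> {y, a} \<in> E) \<and> (b \<noteq> x \<and> b \<noteq> y \<and> {x, b} \<in> E \<and> {y, b} \<in> E))"
      proof
        assume h: "(a \<noteq> x \<and> a \<noteq> y \<and> {x, a} \<in> E \<and> {y, a} \<in> E) \<and> (b \<noteq> x \<and> b \<noteq> y \<and> {x, b} \<in> E \<and> {y, b} \<in> E)"
        have "a \<in> X" "b \<in> X" using ab SX by (auto simp: simpl_def)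
        hence "a \<in> cn X E x y" "b \<in> cn X E x y" using h by (auto simp: cn_def)
        thus False using cnq ab unfolding clq_def by blast
      qed
      thus ?thesis using good ab by blast
    qed
  qed
qed

lemma cut_lemma:
  assumes "finite S" "HS E S" "expS E S x y" "x \<in> A" "y \<notin> A"
  shows "\<exists>a b. expS E S a b \<and> a \<in> A \<and> b \<notin> A \<and> {a, b} \<noteq> {x, y}"
  using assms
proof (induction S rule: finite_psubset_induct)
  case (psubset S)
  note ex = psubset.prems(2)
  have xy: "x \<in> S" "y \<in> S" "x \<noteq> y" "{x,y} \<in> E" using ex by (auto simp: expS_def)
  show ?case
  proof (cases "clq E S")
    case True
    obtain z where z: "z \<in> cn S E x y" using ex by (auto simp: expS_def)
    have zz: "z \<in> S" "z \<noteq> x" "z \<noteq> y" "{x,z} \<in> E" "{y,z} \<in> E" using z by (auto simp: cn_def)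
    have clqS: "clq E (cn S E a b)" for a b using True unfolding clq_def cn_def by auto
    show ?thesis
    proof (cases "z \<in> A")
      case True
      have "x \<in> cn S E z y" using xy zz by (auto simp: cn_def insert_commute)
      hence "expS E S z y" using zz xy clqS by (auto simp: expS_def insert_commute)
      moreover have "{z, y} \<noteq> {x, y}" using zz by (auto simp: doubleton_eq_iff)
      ultimately show ?thesis using True psubset.prems by blast
    next
      case False
      have "y \<in> cn S E x z" using xy zz by (auto simp: cn_def insert_commute)
      hence "expS E S x z" using zz xy clqS by (auto simp: expS_def insert_commute)
      moreover have "{x, z} \<noteq> {x, y}" using zz by (auto simp: doubleton_eq_iff)
      ultimately show ?thesis using False psubset.prems by blast
    qed
  next
    case False
    obtain a b where ab: "simpl E S a" "simpl E S b" "a \<noteq> b" "{a, b} \<notin> E"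
      using dirac[OF psubset.hyps(1) psubset.prems(1) False] by blast
    obtain v where v: "simpl E S v" "v \<noteq> x" "v \<noteq> y"
    proof -
      have "\<not> (a \<in> {x,y} \<and> b \<in> {x,y})" using ab xy by (auto simp: insert_commute)
      thus ?thesis using that ab by blast
    qed
    have vS: "v \<in> S" and vc: "clq E (nb E S v)" using v by (auto simp: simpl_def)
    show ?thesis
    proof (cases "(\<exists>u\<in>nb E S v. (u \<in> A) \<noteq> (v \<in> A)) \<and> (\<exists>u1\<in>nb E S v. \<exists>u2\<in>nb E S v. u1 \<noteq> u2)")
      case True
      then obtain u u1 u2 where u: "u \<in> nb E S v" "(u \<in> A) \<noteq> (v \<in> A)"
        and u12: "u1 \<in> nb E S v" "u2 \<in> nb E S v" "u1 \<noteq> u2" by blast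
      obtain w where w: "w \<in> nb E S v" "w \<noteq> u" using u12 by blast
      have uu: "u \<in> S" "u \<noteq> v" "{u, v} \<in> E" using u by (auto simp: nb_def)
      have ww: "w \<in> S" "w \<noteq> v" "{w, v} \<in> E" using w by (auto simp: nb_def)
      have cnuv: "cn S E v u = nb E S v - {u}"
        using vc uu unfolding cn_def nb_def clq_def by (auto simp: insert_commute)
      have "w \<in> cn S E v u" using cnuv w by auto
      moreover have "clq E (cn S E v u)" using cnuv vc unfolding clq_def by auto
      ultimately have e1: "expS E S v u" and e2: "expS E S u v"
        using uu vS cn_sym[of S E v u] by (auto simp: expS_def insert_commute)
      have ne: "{v, u} \<noteq> {x, y}" "{u, v} \<noteq> {x, y}" using v by (auto simp: doubleton_eq_iff)
      show ?thesis
      proof (cases "v \<in> A")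
        case True thus ?thesis using e1 ne u by auto
      next
        case False thus ?thesis using e2 ne u by auto
      qed
    next
      case notP: False
      define S' where "S' = S - {v}"
      have sub: "S' \<subset> S" using vS S'_def by auto
      have HS': "HS E S'" using HS_mono[OF psubset.prems(1)] S'_def by auto
      have vnot: "\<not> ({a', v} \<in> E \<and> {b', v} \<in> E)" if "a' \<in> S" "b' \<in> S" "a' \<noteq> b'" "a' \<noteq> v" "b' \<noteq> v"
          "a' \<in> A" "b' \<notin> A" for a' b'
      proof
        assume h: "{a', v} \<in> E \<and> {b', v} \<in> E"
        hence "a' \<in> nb E S v" "b' \<in> nb E S v" using that by (auto simp: nb_def)
        thus False using notP that by blast
      qed
      have cneq: "cn S' E a' b' = cn S E a' b'" if "a' \<in> S" "b' \<in> S" "a' \<noteq> b'" "a' \<noteq> v" "b' \<noteq> v"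
          "a' \<in> A" "b' \<notin> A" for a' b'
        using vnot[OF that] S'_def unfolding cn_def by (auto simp: insert_commute)
      have "expS E S' x y" using ex cneq[OF xy(1,2,3) _ _ psubset.prems(3,4)] v S'_def
        by (auto simp: expS_def)
      from psubset.IH[OF sub HS' this psubset.prems(3,4)] obtain a' b' where
        ab': "expS E S' a' b'" "a' \<in> A" "b' \<notin> A" "{a', b'} \<noteq> {x, y}" by blast
      have "a' \<in> S" "b' \<in> S" "a' \<noteq> b'" "a' \<noteq> v" "b' \<noteq> v" using ab' S'_def by (auto simp: expS_def)
      from cneq[OF this ab'(2,3)] have "expS E S a' b'" using ab' S'_def by (auto simp: expS_def)
      thus ?thesis using ab' by blast
    qed
  qed
qed

definition deg1 :: "'a set set \<Rightarrow> 'a set \<Rightarrow> bool" where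
  "deg1 E S \<longleftrightarrow> (\<forall>S'. S' \<subseteq> S \<longrightarrow> S' \<noteq> {} \<longrightarrow> (\<exists>v\<in>S'. \<forall>u1\<in>nb E S' v. \<forall>u2\<in>nb E S' v. u1 = u2))"

lemma noexp_deg1:
  assumes "finite S" "HS E S" "\<forall>a b. \<not> expS E S a b"
  shows "deg1 E S"
  using assms
proof (induction S rule: finite_psubset_induct)
  case (psubset S)
  show ?case
  proof (cases "S = {}")
    case True thus ?thesis by (auto simp: deg1_def)
  next
    case False
    obtain v where v: "simpl E S v" using psubset.prems False unfolding HS_def by blast
    have vS: "v \<in> S" and vc: "clq E (nb E S v)" using v by (auto simp: simpl_def)
    have one: "u1 = u2" if "u1 \<in> nb E S v" "u2 \<in> nb E S v" for u1 u2
    proof (rule ccontr)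
      assume ne: "u1 \<noteq> u2"
      have uu: "u1 \<in> S" "u1 \<noteq> v" "{u1, v} \<in> E" using that by (auto simp: nb_def)
      have cnuv: "cn S E v u1 = nb E S v - {u1}"
        using vc uu unfolding cn_def nb_def clq_def by (auto simp: insert_commute)
      have "expS E S v u1" using cnuv vc uu vS that ne
        by (auto simp: expS_def insert_commute clq_def)
      thus False using psubset.prems by blast
    qed
    define S' where "S' = S - {v}"
    have sub: "S' \<subset> S" using vS S'_def by auto
    have HS': "HS E S'" using HS_mono[OF psubset.prems(1)] S'_def by auto
    have "\<not> expS E S' a b" for a b
    proof
      assume e: "expS E S' a b"
      have ab: "a \<in> S" "b \<in> S" "a \<noteq> v" "b \<noteq> v" "a \<noteq> b" using e S'_def by (auto simp: expS_def)
      have "\<not> ({a, v} \<in> E \<and> {b, v} \<in> E)"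
      proof
        assume "{a, v} \<in> E \<and> {b, v} \<in> E"
        hence "a \<in> nb E S v" "b \<in> nb E S v" using ab by (auto simp: nb_def)
        thus False using one ab by blast
      qed
      hence "cn S' E a b = cn S E a b" using S'_def unfolding cn_def by (auto simp: insert_commute)
      hence "expS E S a b" using e ab by (auto simp: expS_def)
      thus False using psubset.prems by blast
    qed
    hence d': "deg1 E S'" using psubset.IH[OF sub HS'] by blast
    show ?thesis unfolding deg1_def
    proof (intro allI impI)
      fix T assume T: "T \<subseteq> S" "T \<noteq> {}"
      show "\<exists>w\<in>T. \<forall>u1\<in>nb E T w. \<forall>u2\<in>nb E T w. u1 = u2"
      proof (cases "v \<in> T")
        case True
        have "nb E T v \<subseteq> nb E S v" using T by (auto simp: nb_def)
        thus ?thesis using True one by blast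
      next
        case False
        hence "T \<subseteq> S'" using T S'_def by auto
        thus ?thesis using d' T unfolding deg1_def by blast
      qed
    qed
  qed
qed

definition reachS :: "'a set set \<Rightarrow> 'a set \<Rightarrow> 'a \<Rightarrow> 'a \<Rightarrow> bool" where
  "reachS F S = (\<lambda>a b. a \<in> S \<and> b \<in> S \<and> adjacent F a b)\<^sup>*\<^sup>*"

lemma bridge:
  assumes "finite S" "deg1 E S" "u \<in> S" "v \<in> S" "u \<noteq> v" "{u, v} \<in> E" "F \<subseteq> E - {{u, v}}"
  shows "\<not> reachS F S u v"
  using assms
proof (induction S rule: finite_psubset_induct)
  case (psubset S)
  obtain w where w: "w \<in> S" and wd: "\<forall>u1\<in>nb E S w. \<forall>u2\<in>nb E S w. u1 = u2"
    using psubset.prems(1,2) unfolding deg1_def by blast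
  have FE: "adjacent F a b \<Longrightarrow> {a, b} \<in> E \<and> a \<noteq> b \<and> {a,b} \<noteq> {u,v}" for a b
    using psubset.prems(6) by (auto simp: adjacent_def)
  have wnb: "p = q" if "p \<in> S" "q \<in> S" "adjacent E w p" "adjacent E w q" for p q
    using wd that by (auto simp: nb_def adjacent_def insert_commute)
  show ?case
  proof (cases "w = u")
    case True
    have nn: "\<not> (adjacent F u p)" if "p \<in> S" for p
    proof
      assume a: "adjacent F u p"
      hence "adjacent E u p" "{u,p} \<noteq> {u,v}" using FE by (auto simp: adjacent_def)
      moreover have "adjacent E u v" using psubset.prems by (auto simp: adjacent_def)
      ultimately show False using wnb[of p v] True that psubset.prems by auto
    qed
    show ?thesis
    proof
      assume "reachS F S u v"
      thus False unfolding reachS_def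
        by (cases rule: converse_rtranclpE) (use nn psubset.prems(4) in auto)
    qed
  next
    case wu: False
    show ?thesis
    proof (cases "w = v")
      case True
      have nn: "\<not> (adjacent F p v)" if "p \<in> S" for p
      proof
        assume a: "adjacent F p v"
        hence "adjacent E v p" "{p,v} \<noteq> {u,v}" using FE by (auto simp: adjacent_def insert_commute)
        moreover have "adjacent E v u" using psubset.prems by (auto simp: adjacent_def insert_commute)
        ultimately show False using wnb[of p u] True that psubset.prems by auto
      qed
      show ?thesis
      proof
        assume "reachS F S u v"
        thus False unfolding reachS_def
          by (cases rule: rtranclp.cases) (use nn psubset.prems(4) in auto)
      qed
    next
      case wv: False
      define S' where "S' = S - {w}"
      have sub: "S' \<subset> S" using w S'_def by auto
      have d': "deg1 E S'" using psubset.prems(1) S'_def unfolding deg1_def by (meson Diff_subset subset_trans)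
      have IH: "\<not> reachS F S' u v" using psubset.IH[OF sub d'] psubset.prems wu wv S'_def by auto
      have "(t \<noteq> w \<longrightarrow> reachS F S' u t) \<and> (t = w \<longrightarrow> (\<forall>p. p \<in> S \<and> adjacent F w p \<longrightarrow> reachS F S' u p))"
        if "reachS F S u t" for t
        using that unfolding reachS_def
      proof (induction rule: rtranclp_induct)
        case base thus ?case using wu by auto
      next
        case (step t t')
        have st: "t \<in> S" "t' \<in> S" "adjacent F t t'" using step.hyps by auto
        show ?case
        proof (intro conjI impI allI)
          assume t'w: "t' \<noteq> w"
          show "(\<lambda>a b. a \<in> S' \<and> b \<in> S' \<and> adjacent F a b)\<^sup>*\<^sup>* u t'"
          proof (cases "t = w")
            case True thus ?thesis using step.IH st by auto
          next
            case False
            hence "(\<lambda>a b. a \<in> S' \<and> b \<in> S' \<and> adjacent F a b)\<^sup>*\<^sup>* u t" using step.IH by auto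
            thus ?thesis using st False t'w S'_def by (auto intro: rtranclp.rtrancl_into_rtrancl)
          qed
        next
          fix p assume t'w: "t' = w" and p: "p \<in> S \<and> adjacent F w p"
          have tw: "t \<noteq> w" using st t'w by (auto simp: adjacent_def)
          have "adjacent E w t" using FE[OF st(3)] t'w by (auto simp: adjacent_def insert_commute)
          moreover have "adjacent E w p" using FE[of w p] p by (auto simp: adjacent_def)
          ultimately have "p = t" using wnb st p by auto
          thus "(\<lambda>a b. a \<in> S' \<and> b \<in> S' \<and> adjacent F a b)\<^sup>*\<^sup>* u p" using step.IH tw by auto
        qed
      qed
      thus ?thesis using IH wv by auto
    qed
  qed
qed



lemma all_pairs_iff: "e \<in> all_pairs X \<longleftrightarrow> (\<exists>x y. e = {x, y} \<and> x \<in> X \<and> y \<in> X \<and> x \<noteq> y)"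
  unfolding all_pairs_def by blast

lemma edge_in_pairs:
  assumes "G \<subseteq> all_pairs X" "{x, y} \<in> G"
  shows "x \<in> X" "y \<in> X" "x \<noteq> y"
proof -
  have "{x,y} \<in> all_pairs X" using assms by blast
  then obtain a b where "{x,y} = {a,b}" "a \<in> X" "b \<in> X" "a \<noteq> b" unfolding all_pairs_iff by blast
  note h = this
  have "x \<in> {a,b}" "y \<in> {a,b}" using h(1) by blast+
  thus "x \<in> X" "y \<in> X" using h by blast+
  show "x \<noteq> y"
  proof
    assume "x = y"
    hence "{a,b} = {x}" using h(1) by simp
    hence "a = x" "b = x" by blast+
    thus False using h(4) by simp
  qed
qed

lemma max_clique_ex:
  assumes "finite X" "clique X E D"
  shows "\<exists>C. maximal_clique X E C \<and> D \<subseteq> C"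
proof -
  let ?Cs = "{C. clique X E C \<and> D \<subseteq> C}"
  have "?Cs \<subseteq> Pow X" by (auto simp: clique_def)
  hence fin: "finite ?Cs" using assms(1) by (meson finite_Pow_iff finite_subset)
  have "?Cs \<noteq> {}" using assms(2) by auto
  from finite_has_maximal[OF fin this] obtain m where m: "m \<in> ?Cs" "\<forall>b\<in>?Cs. m \<subseteq> b \<longrightarrow> m = b"
    by blast
  have "maximal_clique X E m" unfolding maximal_clique_def using m by auto
  thus ?thesis using m by blast
qed

lemma clq_insert: "clq E (insert a Y) \<longleftrightarrow> clq E Y \<and> (\<forall>q\<in>Y. q \<noteq> a \<longrightarrow> {a, q} \<in> E)"
  unfolding clq_def
proof (intro iffI)
  assume h: "\<forall>p\<in>insert a Y. \<forall>q\<in>insert a Y. p \<noteq> q \<longrightarrow> {p, q} \<in> E"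
  thus "(\<forall>p\<in>Y. \<forall>q\<in>Y. p \<noteq> q \<longrightarrow> {p, q} \<in> E) \<and> (\<forall>q\<in>Y. q \<noteq> a \<longrightarrow> {a, q} \<in> E)"
    by simp
next
  assume h: "(\<forall>p\<in>Y. \<forall>q\<in>Y. p \<noteq> q \<longrightarrow> {p, q} \<in> E) \<and> (\<forall>q\<in>Y. q \<noteq> a \<longrightarrow> {a, q} \<in> E)"
  show "\<forall>p\<in>insert a Y. \<forall>q\<in>insert a Y. p \<noteq> q \<longrightarrow> {p, q} \<in> E"
  proof (intro ballI impI)
    fix p q assume p: "p \<in> insert a Y" and q: "q \<in> insert a Y" and pq: "p \<noteq> q"
    show "{p, q} \<in> E"
    proof (cases "p = a")
      case True thus ?thesis using h q pq by auto
    next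
      case False
      hence pY: "p \<in> Y" using p by auto
      show ?thesis
      proof (cases "q = a")
        case True
        hence "{a, p} \<in> E" using h pY pq by auto
        thus ?thesis using True by (simp add: insert_commute)
      next
        case False thus ?thesis using h pY q pq by auto
      qed
    qed
  qed
qed

lemma clique_iff: "clique X E C \<longleftrightarrow> C \<subseteq> X \<and> clq E C"
  unfolding clique_def clq_def by blast

lemma EXP:
  assumes fin: "finite X" and GX: "G \<subseteq> all_pairs X"
  shows "exposed_edge X G {x, y} \<longleftrightarrow> expS G X x y"
proof
  assume ee: "exposed_edge X G {x, y}"
  have e: "{x,y} \<in> G" using ee by (simp add: exposed_edge_def)
  note xy = edge_in_pairs[OF GX e]
  from ee have "\<exists>!C. maximal_clique X G C \<and> {x,y} \<subseteq> C" by (simp add: exposed_edge_def)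
  then obtain C where C: "maximal_clique X G C" "{x,y} \<subseteq> C"
    and uq: "\<And>C'. maximal_clique X G C' \<and> {x,y} \<subseteq> C' \<Longrightarrow> C' = C"
    by (metis (no_types, lifting))
  have nf: "\<not> facet_edge X G {x,y}" using ee by (simp add: exposed_edge_def)
  have cne: "cn X G x y \<noteq> {}"
  proof
    assume emp: "cn X G x y = {}"
    have cl: "clique X G {x,y}" using xy e by (auto simp: clique_def insert_commute)
    have allC: "C' = {x,y}" if cl': "clique X G C'" and sb: "{x,y} \<subseteq> C'" for C'
    proof (rule ccontr)
      assume "C' \<noteq> {x,y}"
      then obtain z where z: "z \<in> C'" "z \<noteq> x" "z \<noteq> y" using sb by blast
      have "{x, z} \<in> G" "{y, z} \<in> G" "z \<in> X" using cl' sb z xy unfolding clique_def by auto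
      hence "z \<in> cn X G x y" using z by (auto simp: cn_def)
      thus False using emp by auto
    qed
    have "facet_edge X G {x,y}" unfolding facet_edge_def maximal_clique_def
      using e cl allC by blast
    thus False using nf by simp
  qed
  have "clq G (cn X G x y)"
  proof (unfold clq_def, intro ballI impI)
    fix p q assume pq: "p \<in> cn X G x y" "q \<in> cn X G x y" "p \<noteq> q"
    have c3: "clique X G {x,y,r}" if r: "r \<in> cn X G x y" for r
    proof -
      have rr: "r \<in> X" "r \<noteq> x" "r \<noteq> y" "{x,r} \<in> G" "{y,r} \<in> G" using r by (auto simp: cn_def)
      have "clq G {r}" by (simp add: clq_def)
      hence "clq G {y,r}" using rr by (simp add: clq_insert)
      hence "clq G {x,y,r}" using rr xy e by (simp add: clq_insert)
      thus ?thesis using rr xy by (simp add: clique_iff)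
    qed
    obtain C1 where "maximal_clique X G C1" "{x,y,p} \<subseteq> C1" using max_clique_ex[OF fin c3[OF pq(1)]] by blast
    hence "C1 = C" "p \<in> C1" using uq by auto
    obtain C2 where "maximal_clique X G C2" "{x,y,q} \<subseteq> C2" using max_clique_ex[OF fin c3[OF pq(2)]] by blast
    hence "C2 = C" "q \<in> C2" using uq by auto
    have "clq G C" using C(1) by (simp add: maximal_clique_def clique_iff)
    thus "{p, q} \<in> G" using \<open>p \<in> C1\<close> \<open>q \<in> C2\<close> \<open>C1 = C\<close> \<open>C2 = C\<close> pq(3)
      unfolding clq_def by blast
  qed
  thus "expS G X x y" using xy e cne by (simp add: expS_def)
next
  assume ex: "expS G X x y"
  have xy: "x \<in> X" "y \<in> X" "x \<noteq> y" "{x,y} \<in> G" and cne: "cn X G x y \<noteq> {}"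
    and cq: "clq G (cn X G x y)" using ex by (auto simp: expS_def)
  define N where "N = cn X G x y"
  have NX: "N \<subseteq> X" and Nx: "\<forall>q\<in>N. q \<noteq> x \<longrightarrow> {x,q} \<in> G" and Ny: "\<forall>q\<in>N. q \<noteq> y \<longrightarrow> {y,q} \<in> G"
    and Nxy: "x \<notin> N" "y \<notin> N"
    unfolding N_def cn_def by auto
  define C0 where "C0 = insert x (insert y N)"
  have "clq G (insert y N)" using cq Ny unfolding N_def[symmetric] by (simp add: clq_insert)
  hence "clq G C0" unfolding C0_def using Nx xy by (simp add: clq_insert)
  hence clC: "clique X G C0" using NX xy unfolding C0_def by (simp add: clique_iff)
  have subC: "C' \<subseteq> C0" if cl': "clique X G C'" and sb: "{x,y} \<subseteq> C'" for C'
  proof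
    fix z assume z: "z \<in> C'"
    show "z \<in> C0"
    proof (cases "z = x \<or> z = y")
      case True thus ?thesis unfolding C0_def by auto
    next
      case False
      have "z \<in> X" "{x,z} \<in> G" "{y,z} \<in> G" using cl' sb z False unfolding clique_def by auto
      hence "z \<in> N" using False unfolding N_def cn_def by auto
      thus ?thesis unfolding C0_def by auto
    qed
  qed
  have xyC0: "{x,y} \<subseteq> C0" unfolding C0_def by auto
  have mC: "maximal_clique X G C0"
    unfolding maximal_clique_def
  proof (intro conjI allI impI)
    show "clique X G C0" by (rule clC)
    fix C' assume h: "clique X G C' \<and> C0 \<subseteq> C'"
    hence "C' \<subseteq> C0" using subC xyC0 by blast
    thus "C' = C0" using h by blast
  qed
  have uq: "C' = C0" if m': "maximal_clique X G C'" and sb: "{x,y} \<subseteq> C'" for C'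
  proof -
    have "clique X G C'" using m' by (simp add: maximal_clique_def)
    hence "C' \<subseteq> C0" using subC sb by blast
    thus ?thesis using m' clC unfolding maximal_clique_def by blast
  qed
  have "\<exists>!C. maximal_clique X G C \<and> {x,y} \<subseteq> C"
  proof (rule ex1I[of _ C0])
    show "maximal_clique X G C0 \<and> {x, y} \<subseteq> C0" using mC xyC0 by blast
    fix C assume "maximal_clique X G C \<and> {x, y} \<subseteq> C"
    thus "C = C0" using uq by blast
  qed
  moreover have "\<not> facet_edge X G {x,y}"
  proof
    assume "facet_edge X G {x,y}"
    hence m: "maximal_clique X G {x,y}" by (simp add: facet_edge_def)
    have "C0 = {x,y}" using uq[OF m] by simp
    moreover obtain z where z: "z \<in> N" using cne unfolding N_def by blast
    moreover have "z \<in> C0" using z unfolding C0_def by blast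
    ultimately have "z = x \<or> z = y" by simp
    thus False using Nxy z by auto
  qed
  ultimately show "exposed_edge X G {x, y}" using xy by (simp add: exposed_edge_def)
qed



abbreviation reach :: "'a set set \<Rightarrow> 'a \<Rightarrow> 'a \<Rightarrow> bool" where
  "reach F \<equiv> (adjacent F)\<^sup>*\<^sup>*"

lemma reach_sym: "reach F a b \<Longrightarrow> reach F b a"
proof -
  have "symp (adjacent F)" unfolding symp_def adjacent_def by (auto simp: insert_commute)
  hence "symp (reach F)" by (rule symp_rtranclp)
  thus "reach F a b \<Longrightarrow> reach F b a" by (auto dest: sympD)
qed

lemma rt_mono:
  assumes "\<And>a b. R a b \<Longrightarrow> Q\<^sup>*\<^sup>* a b" "R\<^sup>*\<^sup>* x y"
  shows "Q\<^sup>*\<^sup>* x y"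
  using assms(2)
proof (induction rule: rtranclp_induct)
  case base thus ?case by simp
next
  case (step y z) thus ?case using assms(1) by (meson rtranclp_trans)
qed

lemma bridges_acyclic:
  assumes "\<And>a b. {a, b} \<in> E \<Longrightarrow> a \<noteq> b \<Longrightarrow> \<not> reach (E - {{a, b}}) a b"
  shows "acyclic_graph E"
  unfolding acyclic_graph_def
proof
  assume "\<exists>vs. is_cycle E vs"
  then obtain vs where c: "is_cycle E vs" by blast
  define n where "n = length vs"
  have n3: "n \<ge> 3" and dist: "distinct vs"
    and adj: "\<And>i. i < n - 1 \<Longrightarrow> adjacent E (vs ! i) (vs ! (i + 1))"
    and la: "adjacent E (last vs) (hd vs)" using c unfolding is_cycle_def n_def by auto
  have ne: "vs \<noteq> []" using n3 n_def by auto
  define a where "a = vs ! 0"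
  define b where "b = vs ! (n - 1)"
  have hd: "hd vs = a" using ne by (simp add: a_def hd_conv_nth)
  have lst: "last vs = b" using ne by (simp add: b_def n_def last_conv_nth)
  have ab: "{b, a} \<in> E" "b \<noteq> a" using la hd lst by (auto simp: adjacent_def)
  have ab': "{a, b} \<in> E" using ab(1) by (simp add: insert_commute)
  have "reach (E - {{a, b}}) a (vs ! i)" if "i < n" for i
    using that
  proof (induction i)
    case 0 thus ?case by (simp add: a_def)
  next
    case (Suc i)
    have ai: "adjacent E (vs ! i) (vs ! (i + 1))" using adj Suc.prems by auto
    have neq: "{vs ! i, vs ! (i + 1)} \<noteq> {a, b}"
    proof
      assume eq: "{vs ! i, vs ! (i + 1)} = {a, b}"
      have i1: "i < n" "i + 1 < n" "0 < n" "n - 1 < n" using Suc.prems n3 by auto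
      have inj: "\<And>j k. j < n \<Longrightarrow> k < n \<Longrightarrow> vs ! j = vs ! k \<Longrightarrow> j = k"
        using dist n_def nth_eq_iff_index_eq by blast
      from eq have "(vs ! i = a \<and> vs ! (i+1) = b) \<or> (vs ! i = b \<and> vs ! (i+1) = a)"
        by (auto simp: doubleton_eq_iff)
      thus False
      proof
        assume h: "vs ! i = a \<and> vs ! (i+1) = b"
        hence "i = 0" "i + 1 = n - 1" using inj i1 unfolding a_def b_def by blast+
        thus False using n3 by auto
      next
        assume h: "vs ! i = b \<and> vs ! (i+1) = a"
        hence "i = n - 1" using inj i1 unfolding b_def by blast
        thus False using i1 by auto
      qed
    qed
    have "adjacent (E - {{a, b}}) (vs ! i) (vs ! (i + 1))" using ai neq by (auto simp: adjacent_def)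
    thus ?case using Suc by (auto intro: rtranclp.rtrancl_into_rtrancl)
  qed
  hence "reach (E - {{a, b}}) a b" using n3 unfolding b_def by auto
  thus False using assms[OF ab' ab(2)[symmetric]] by blast
qed

lemma finite_all_pairs: "finite X \<Longrightarrow> finite (all_pairs X)"
proof -
  assume "finite X"
  moreover have "all_pairs X \<subseteq> Pow X" unfolding all_pairs_def by auto
  ultimately show ?thesis by (meson finite_Pow_iff finite_subset)
qed

lemma connected_mono:
  assumes "connected_graph X H" "\<And>a b. adjacent H a b \<Longrightarrow> reach H' a b"
  shows "connected_graph X H'"
  using assms rt_mono unfolding connected_graph_def by metis

lemma CS:
  assumes fin: "finite X" and HX: "H \<subseteq> all_pairs X" and con: "connected_graph X H"
  shows "\<exists>T \<subseteq> H. spanning_tree X T"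
proof -
  have finH: "finite H" using finite_subset[OF HX finite_all_pairs[OF fin]] .
  obtain H' where H': "H' \<subseteq> H \<and> connected_graph X H'"
    and minc: "\<And>H''. H'' \<subseteq> H \<and> connected_graph X H'' \<Longrightarrow> card H' \<le> card H''"
    using ex_has_least_nat[of "\<lambda>H'. H' \<subseteq> H \<and> connected_graph X H'" H card] con by blast
  have finH': "finite H'" using H' finH finite_subset by blast
  have "acyclic_graph H'"
  proof (rule bridges_acyclic)
    fix a b assume ab: "{a, b} \<in> H'" "a \<noteq> b"
    show "\<not> reach (H' - {{a, b}}) a b"
    proof
      assume r: "reach (H' - {{a, b}}) a b"
      have "connected_graph X (H' - {{a,b}})"
      proof (rule connected_mono[of X H'])
        show "connected_graph X H'" using H' by blast
        fix u v assume uv: "adjacent H' u v"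
        show "reach (H' - {{a, b}}) u v"
        proof (cases "{u, v} = {a, b}")
          case True
          hence "(u = a \<and> v = b) \<or> (u = b \<and> v = a)" by (auto simp: doubleton_eq_iff)
          thus ?thesis
          proof (elim disjE)
            assume "u = a \<and> v = b" thus ?thesis using r by simp
          next
            assume "u = b \<and> v = a" thus ?thesis using reach_sym[OF r] by simp
          qed
        next
          case False
          hence "adjacent (H' - {{a, b}}) u v" using uv by (auto simp: adjacent_def)
          thus ?thesis by (rule r_into_rtranclp)
        qed
      qed
      hence "card H' \<le> card (H' - {{a,b}})" using minc H' by blast
      moreover have "card (H' - {{a,b}}) < card H'" using finH' ab(1) by (meson card_Diff1_less)
      ultimately show False by simp
    qed
  qed
  moreover have "is_graph_on X H'" using H' HX unfolding is_graph_on_def by blast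
  ultimately show ?thesis using H' unfolding spanning_tree_def by blast
qed

lemma EW:
  assumes "Metric_space X d"
  shows "edge_weight d {x, y} = d x y"
  unfolding edge_weight_def
proof (rule the_equality)
  show "\<exists>a b. {x, y} = {a, b} \<and> d x y = d a b" by blast
  fix r assume "\<exists>a b. {x, y} = {a, b} \<and> r = d a b"
  then obtain a b where ab: "{x, y} = {a, b}" "r = d a b" by blast
  from ab(1) have "(x = a \<and> y = b) \<or> (x = b \<and> y = a)" by (auto simp: doubleton_eq_iff)
  thus "r = d x y" using ab(2) Metric_space.commute[OF assms] by auto
qed

lemma EWpos:
  assumes "Metric_space X d" "e \<in> all_pairs X"
  shows "0 < edge_weight d e"
proof -
  obtain x y where xy: "e = {x, y}" "x \<in> X" "y \<in> X" "x \<noteq> y" using assms(2) unfolding all_pairs_iff by blast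
  have "d x y \<noteq> 0" using Metric_space.zero[OF assms(1) xy(2,3)] xy(4) by simp
  moreover have "0 \<le> d x y" using Metric_space.nonneg[OF assms(1)] by simp
  ultimately show ?thesis using EW[OF assms(1)] xy(1) by simp
qed

lemma sum_le_sub:
  assumes "Metric_space X d" "finite X" "A \<subseteq> B" "B \<subseteq> all_pairs X"
  shows "(\<Sum>e\<in>A. edge_weight d e) \<le> (\<Sum>e\<in>B. edge_weight d e)"
proof (rule sum_mono2)
  show "finite B" using finite_subset[OF assms(4) finite_all_pairs[OF assms(2)]] .
  show "A \<subseteq> B" by fact
  fix b assume "b \<in> B - A"
  thus "0 \<le> edge_weight d b" using EWpos[OF assms(1)] assms(4) by (meson DiffD1 less_imp_le subsetD)
qed

lemma W:
  assumes "Metric_space X d" "finite X" "minimum_spanning_tree X d T"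
    "H \<subseteq> all_pairs X" "connected_graph X H"
  shows "(\<Sum>e\<in>T. edge_weight d e) \<le> (\<Sum>e\<in>H. edge_weight d e)"
proof -
  obtain T'' where T'': "T'' \<subseteq> H" "spanning_tree X T''" using CS[OF assms(2,4,5)] by blast
  have "(\<Sum>e\<in>T. edge_weight d e) \<le> (\<Sum>e\<in>T''. edge_weight d e)"
    using assms(3) T''(2) unfolding minimum_spanning_tree_def by blast
  also have "\<dots> \<le> (\<Sum>e\<in>H. edge_weight d e)" using sum_le_sub[OF assms(1,2) T''(1) assms(4)] .
  finally show ?thesis .
qed

lemma complete_connected: "connected_graph X (all_pairs X)"
  unfolding connected_graph_def
proof (intro ballI)
  fix x y assume "x \<in> X" "y \<in> X"
  show "reach (all_pairs X) x y"
  proof (cases "x = y")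
    case True thus ?thesis by simp
  next
    case False
    hence "adjacent (all_pairs X) x y" using \<open>x \<in> X\<close> \<open>y \<in> X\<close> unfolding adjacent_def all_pairs_def by blast
    thus ?thesis by (rule r_into_rtranclp)
  qed
qed

lemma MST_exists:
  assumes "Metric_space X d" "finite X"
  shows "\<exists>T. minimum_spanning_tree X d T"
proof -
  let ?ST = "{T. spanning_tree X T}"
  let ?w = "\<lambda>T. (\<Sum>e\<in>T. edge_weight d e)"
  have "?ST \<subseteq> Pow (all_pairs X)" unfolding spanning_tree_def is_graph_on_def by auto
  hence fin: "finite ?ST" using finite_all_pairs[OF assms(2)] by (meson finite_Pow_iff finite_subset)
  obtain T0 where "T0 \<subseteq> all_pairs X" "spanning_tree X T0"
    using CS[OF assms(2) subset_refl complete_connected] by blast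
  hence ne: "?ST \<noteq> {}" by blast
  define m where "m = Min (?w ` ?ST)"
  have "m \<in> ?w ` ?ST" unfolding m_def using fin ne by (intro Min_in) auto
  then obtain T where T: "spanning_tree X T" "?w T = m" by blast
  have "\<forall>T'. spanning_tree X T' \<longrightarrow> ?w T \<le> ?w T'"
    using T fin unfolding m_def by (auto intro: Min_le)
  thus ?thesis using T unfolding minimum_spanning_tree_def by blast
qed

lemma dichotomy:
  assumes "connected_graph X T" "x \<in> X" "z \<in> X"
  shows "reach (T - {{x, y}}) x z \<or> reach (T - {{x, y}}) y z"
proof -
  have "reach T x z" using assms unfolding connected_graph_def by blast
  thus ?thesis
  proof (induction rule: rtranclp_induct)
    case base thus ?case by simp
  next
    case (step t t')
    show ?case
    proof (cases "{t, t'} = {x, y}")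
      case True
      hence "t' = x \<or> t' = y" by (auto simp: doubleton_eq_iff)
      thus ?thesis by auto
    next
      case False
      hence a: "adjacent (T - {{x, y}}) t t'" using step.hyps(2) by (auto simp: adjacent_def)
      from step.IH show ?thesis
      proof
        assume "reach (T - {{x, y}}) x t"
        hence "reach (T - {{x, y}}) x t'" using a by (rule rtranclp.rtrancl_into_rtrancl)
        thus ?thesis by simp
      next
        assume "reach (T - {{x, y}}) y t"
        hence "reach (T - {{x, y}}) y t'" using a by (rule rtranclp.rtrancl_into_rtrancl)
        thus ?thesis by simp
      qed
    qed
  qed
qed

lemma reach_mono_sub: "F \<subseteq> F' \<Longrightarrow> reach F a b \<Longrightarrow> reach F' a b"
proof -
  assume "F \<subseteq> F'" "reach F a b"
  moreover have "adjacent F u v \<Longrightarrow> adjacent F' u v" for u v using \<open>F \<subseteq> F'\<close> by (auto simp: adjacent_def)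
  ultimately show ?thesis by (metis mono_rtranclp)
qed

lemma SWAP:
  assumes met: "Metric_space X d" and fin: "finite X" and mst: "minimum_spanning_tree X d T"
    and TG: "T \<subseteq> G" and GX: "G \<subseteq> all_pairs X" and hs: "HS G X" and ex: "expS G X x y"
    and eT: "{x, y} \<in> T"
  shows "\<exists>a b. expS G X a b \<and> {a, b} \<notin> T \<and> {a, b} \<noteq> {x, y} \<and> d x y \<le> d a b \<and>
      connected_graph X (insert {a, b} (T - {{x, y}})) \<and>
      (\<Sum>e\<in>insert {a, b} (T - {{x, y}}). edge_weight d e) = (\<Sum>e\<in>T. edge_weight d e) - d x y + d a b"
proof -
  let ?e = "{x, y}"
  let ?w = "\<lambda>T. (\<Sum>e\<in>T. edge_weight d e)"
  have st: "spanning_tree X T" using mst by (simp add: minimum_spanning_tree_def)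
  have con: "connected_graph X T" and TX: "T \<subseteq> all_pairs X" using st
    by (auto simp: spanning_tree_def is_graph_on_def)
  have finT: "finite T" using finite_subset[OF TX finite_all_pairs[OF fin]] .
  have xy: "x \<in> X" "y \<in> X" "x \<noteq> y" using ex by (auto simp: expS_def)
  define A where "A = {z. reach (T - {?e}) x z}"
  have xA: "x \<in> A" unfolding A_def by simp
  have wdiff: "?w (T - {?e}) = ?w T - d x y"
    using finT eT EW[OF met] by (simp add: sum_diff1)
  have yA: "y \<notin> A"
  proof
    assume "y \<in> A"
    hence r: "reach (T - {?e}) x y" unfolding A_def by simp
    have "connected_graph X (T - {?e})"
    proof (rule connected_mono[OF con])
      fix u v assume uv: "adjacent T u v"
      show "reach (T - {?e}) u v"
      proof (cases "{u, v} = ?e")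
        case True
        hence "(u = x \<and> v = y) \<or> (u = y \<and> v = x)" by (auto simp: doubleton_eq_iff)
        thus ?thesis
        proof (elim disjE)
          assume "u = x \<and> v = y" thus ?thesis using r by simp
        next
          assume "u = y \<and> v = x" thus ?thesis using reach_sym[OF r] by simp
        qed
      next
        case False
        hence "adjacent (T - {?e}) u v" using uv by (auto simp: adjacent_def)
        thus ?thesis by (rule r_into_rtranclp)
      qed
    qed
    hence "?w T \<le> ?w (T - {?e})" using W[OF met fin mst, of "T - {?e}"] TX by blast
    moreover have "0 < d x y" using EWpos[OF met, of ?e] eT TX EW[OF met] by auto
    ultimately show False using wdiff by simp
  qed
  obtain a b where ab: "expS G X a b" "a \<in> A" "b \<notin> A" "{a, b} \<noteq> ?e"
    using cut_lemma[OF fin hs ex xA yA] by blast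
  have abX: "a \<in> X" "b \<in> X" "a \<noteq> b" "{a, b} \<in> G" using ab(1) by (auto simp: expS_def)
  have rxa: "reach (T - {?e}) x a" using ab(2) unfolding A_def by simp
  have abT: "{a, b} \<notin> T"
  proof
    assume "{a, b} \<in> T"
    hence "adjacent (T - {?e}) a b" using ab(4) abX by (auto simp: adjacent_def)
    hence "reach (T - {?e}) x b" by (rule rtranclp.rtrancl_into_rtrancl[OF rxa])
    thus False using ab(3) unfolding A_def by simp
  qed
  define T' where "T' = insert {a, b} (T - {?e})"
  have sub: "T - {?e} \<subseteq> T'" unfolding T'_def by auto
  have rby: "reach (T - {?e}) y b"
    using dichotomy[OF con xy(1) abX(2), of y] ab(3) unfolding A_def by simp
  have rxy: "reach T' x y"
  proof -
    have "reach T' x a" using reach_mono_sub[OF sub rxa] .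
    moreover have "adjacent T' a b" using abX unfolding T'_def adjacent_def by auto
    ultimately have "reach T' x b" by (rule rtranclp.rtrancl_into_rtrancl)
    moreover have "reach T' b y" using reach_mono_sub[OF sub reach_sym[OF rby]] .
    ultimately show ?thesis by (rule rtranclp_trans)
  qed
  have conT': "connected_graph X T'"
  proof (rule connected_mono[OF con])
    fix u v assume uv: "adjacent T u v"
    show "reach T' u v"
    proof (cases "{u, v} = ?e")
      case True
      hence "(u = x \<and> v = y) \<or> (u = y \<and> v = x)" by (auto simp: doubleton_eq_iff)
      thus ?thesis
      proof (elim disjE)
        assume "u = x \<and> v = y" thus ?thesis using rxy by simp
      next
        assume "u = y \<and> v = x" thus ?thesis using reach_sym[OF rxy] by simp
      qed
    next
      case False
      hence "adjacent T' u v" using uv unfolding T'_def by (auto simp: adjacent_def)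
      thus ?thesis by (rule r_into_rtranclp)
    qed
  qed
  have wT': "?w T' = ?w T - d x y + d a b"
  proof -
    have "?w T' = edge_weight d {a, b} + ?w (T - {?e})"
      unfolding T'_def using finT abT by (simp add: sum.insert)
    thus ?thesis using wdiff EW[OF met] by simp
  qed
  have T'X: "T' \<subseteq> all_pairs X" using TX abX GX unfolding T'_def by auto
  have "?w T \<le> ?w T'" using W[OF met fin mst T'X conT'] .
  hence "d x y \<le> d a b" using wT' by simp
  thus ?thesis using ab abT conT' wT' unfolding T'_def by blast
qed

lemma P1:
  assumes met: "Metric_space X d" and fin: "finite X" and mst: "minimum_spanning_tree X d T"
    and TG: "T \<subseteq> G" and GX: "G \<subseteq> all_pairs X" and hs: "HS G X" and ex: "expS G X x y"
    and mx: "\<forall>u v. expS G X u v \<longrightarrow> d u v \<le> d x y"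
  shows "\<exists>T'. minimum_spanning_tree X d T' \<and> T' \<subseteq> G - {{x, y}}"
proof (cases "{x, y} \<in> T")
  case False thus ?thesis using mst TG by blast
next
  case True
  let ?w = "\<lambda>T. (\<Sum>e\<in>T. edge_weight d e)"
  obtain a b where ab: "expS G X a b" "{a, b} \<notin> T" "{a, b} \<noteq> {x, y}"
    "connected_graph X (insert {a, b} (T - {{x, y}}))"
    "?w (insert {a, b} (T - {{x, y}})) = ?w T - d x y + d a b"
    using SWAP[OF met fin mst TG GX hs ex True] by blast
  define T' where "T' = insert {a, b} (T - {{x, y}})"
  have abG: "{a, b} \<in> G" using ab(1) by (simp add: expS_def)
  have T'G: "T' \<subseteq> G - {{x, y}}" using TG abG ab(3) unfolding T'_def by auto
  hence T'X: "T' \<subseteq> all_pairs X" using GX by auto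
  obtain T'' where T'': "T'' \<subseteq> T'" "spanning_tree X T''" using CS[OF fin T'X] ab(4) T'_def by blast
  have "?w T'' \<le> ?w T'" using sum_le_sub[OF met fin T''(1) T'X] .
  also have "\<dots> \<le> ?w T" using ab(5) mx ab(1) unfolding T'_def by force
  finally have le: "?w T'' \<le> ?w T" .
  have "minimum_spanning_tree X d T''"
    unfolding minimum_spanning_tree_def
  proof (intro conjI allI impI)
    show "spanning_tree X T''" by (rule T''(2))
    fix T3 assume "spanning_tree X T3"
    hence "?w T \<le> ?w T3" using mst unfolding minimum_spanning_tree_def by blast
    thus "?w T'' \<le> ?w T3" using le by simp
  qed
  thus ?thesis using T''(1) T'G by blast
qed

lemma final_eq:
  assumes fin: "finite X" and GX: "G \<subseteq> all_pairs X" and hs: "HS G X"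
    and nex: "\<forall>a b. \<not> expS G X a b" and TG: "T \<subseteq> G" and con: "connected_graph X T"
  shows "G = T"
proof (rule ccontr)
  assume "G \<noteq> T"
  then obtain e where e: "e \<in> G" "e \<notin> T" using TG by blast
  have "e \<in> all_pairs X" using e GX by blast
  then obtain u v where uv: "e = {u, v}" "u \<in> X" "v \<in> X" "u \<noteq> v"
    unfolding all_pairs_iff by blast
  have dg: "deg1 G X" using noexp_deg1[OF fin hs nex] .
  have r: "reach T u v" using con uv unfolding connected_graph_def by blast
  have "reachS (G - {{u, v}}) X u v"
    unfolding reachS_def
  proof (rule rt_mono[OF _ r])
    fix a b assume ab: "adjacent T a b"
    have abT: "{a, b} \<in> T" "a \<noteq> b" using ab by (auto simp: adjacent_def)
    hence "a \<in> X" "b \<in> X" using edge_in_pairs[OF GX] TG by blast+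
    moreover have "adjacent (G - {{u, v}}) a b" using abT TG e uv by (auto simp: adjacent_def)
    ultimately show "(\<lambda>a b. a \<in> X \<and> b \<in> X \<and> adjacent (G - {{u, v}}) a b)\<^sup>*\<^sup>* a b" by auto
  qed
  moreover have "\<not> reachS (G - {{u, v}}) X u v"
    using bridge[OF fin dg uv(2,3,4)] e uv by blast
  ultimately show False by simp
qed

lemma max_exposed:
  fixes d :: "'a \<Rightarrow> 'a \<Rightarrow> real"
  assumes fin: "finite X" and ex: "expS G X u0 v0"
  shows "\<exists>x y. expS G X x y \<and> (\<forall>u v. expS G X u v \<longrightarrow> d u v \<le> d x y)"
proof -
  let ?Ex = "{p. p \<in> X \<times> X \<and> expS G X (fst p) (snd p)}"
  have finE: "finite ?Ex" using fin by simp
  have neE: "?Ex \<noteq> {}" using ex by (auto simp: expS_def)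
  define m where "m = Max ((\<lambda>p. d (fst p) (snd p)) ` ?Ex)"
  have "m \<in> (\<lambda>p. d (fst p) (snd p)) ` ?Ex" unfolding m_def using finE neE by (intro Max_in) auto
  then obtain p where p: "p \<in> ?Ex" "d (fst p) (snd p) = m" by blast
  have "\<forall>u v. expS G X u v \<longrightarrow> d u v \<le> m"
  proof (intro allI impI)
    fix u v assume "expS G X u v"
    hence "(u, v) \<in> ?Ex" by (auto simp: expS_def)
    thus "d u v \<le> m" unfolding m_def using finE by (metis (no_types, lifting) Max_ge finite_imageI fst_conv image_eqI snd_conv)
  qed
  thus ?thesis using p by blast
qed

lemma P3:
  assumes met: "Metric_space X d" and fin: "finite X" and mst: "minimum_spanning_tree X d T"
    and TG: "T \<subseteq> G" and GX: "G \<subseteq> all_pairs X" and hs: "HS G X" and ne: "G \<noteq> T"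
  shows "\<exists>x y. expS G X x y \<and> {x, y} \<notin> T \<and> (\<forall>u v. expS G X u v \<longrightarrow> d u v \<le> d x y)"
proof -
  have con: "connected_graph X T" using mst by (simp add: minimum_spanning_tree_def spanning_tree_def)
  have "\<exists>a b. expS G X a b" using final_eq[OF fin GX hs _ TG con] ne by blast
  then obtain x y where xy: "expS G X x y" and mx: "\<forall>u v. expS G X u v \<longrightarrow> d u v \<le> d x y"
    using max_exposed[OF fin] by metis
  show ?thesis
  proof (cases "{x, y} \<in> T")
    case False thus ?thesis using xy mx by blast
  next
    case True
    obtain a b where ab: "expS G X a b" "{a, b} \<notin> T" "d x y \<le> d a b"
      using SWAP[OF met fin mst TG GX hs xy True] by blast
    have "\<forall>u v. expS G X u v \<longrightarrow> d u v \<le> d a b" using mx ab(3) by force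
    thus ?thesis using ab by blast
  qed
qed

lemma tree_noexp:
  assumes "acyclic_graph T"
  shows "\<not> expS T X x y"
proof
  assume ex: "expS T X x y"
  then obtain z where z: "z \<in> cn X T x y" by (auto simp: expS_def)
  have h: "x \<noteq> y" "{x, y} \<in> T" "z \<noteq> x" "z \<noteq> y" "{x, z} \<in> T" "{y, z} \<in> T"
    using ex z by (auto simp: expS_def cn_def)
  have "is_cycle T [x, y, z]"
    unfolding is_cycle_def
  proof (intro conjI)
    show "3 \<le> length [x, y, z]" by simp
    show "distinct [x, y, z]" using h by auto
    show "adjacent T (last [x, y, z]) (hd [x, y, z])" using h by (simp add: adjacent_def insert_commute)
    show "\<forall>i<length [x, y, z] - 1. adjacent T ([x, y, z] ! i) ([x, y, z] ! (i + 1))"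
    proof (intro allI impI)
      fix i assume "i < length [x, y, z] - 1"
      hence "i = 0 \<or> i = 1" by auto
      thus "adjacent T ([x, y, z] ! i) ([x, y, z] ! (i + 1))" using h by (auto simp: adjacent_def)
    qed
  qed
  thus False using assms unfolding acyclic_graph_def by blast
qed

lemma HS_complete: "HS (all_pairs X) X"
  unfolding HS_def
proof (intro allI impI)
  fix S assume S: "S \<subseteq> X" "S \<noteq> {}"
  then obtain v where v: "v \<in> S" by blast
  have "clq (all_pairs X) (nb (all_pairs X) S v)"
    unfolding clq_def nb_def all_pairs_def using S by blast
  thus "\<exists>v. simpl (all_pairs X) S v" using v unfolding simpl_def by blast
qed

lemma erasure_step:
  assumes fin: "finite X" and GX: "G \<subseteq> all_pairs X" and de: "d_erasure X d G H"
  shows "\<exists>x y. H = G - {{x, y}} \<and> expS G X x y \<and> (\<forall>u v. expS G X u v \<longrightarrow> d u v \<le> d x y)"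
proof -
  from de obtain x y where h: "H = G - {{x, y}}" "exposed_edge X G {x, y}"
    "\<forall>u v. exposed_edge X G {u, v} \<longrightarrow> d u v \<le> d x y" unfolding d_erasure_def by blast
  have "expS G X x y" using h(2) EXP[OF fin GX] by simp
  moreover have "\<forall>u v. expS G X u v \<longrightarrow> d u v \<le> d x y" using h(3) EXP[OF fin GX] by simp
  ultimately show ?thesis using h(1) by blast
qed

lemma erasure_of:
  assumes fin: "finite X" and GX: "G \<subseteq> all_pairs X" and ex: "expS G X x y"
    and mx: "\<forall>u v. expS G X u v \<longrightarrow> d u v \<le> d x y"
  shows "d_erasure X d G (G - {{x, y}})"
proof -
  have "exposed_edge X G {x, y}" using ex EXP[OF fin GX] by simp
  moreover have "\<forall>u v. exposed_edge X G {u, v} \<longrightarrow> d u v \<le> d x y" using mx EXP[OF fin GX] by simp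
  ultimately show ?thesis unfolding d_erasure_def by blast
qed

lemma build:
  assumes met: "Metric_space X d" and fin: "finite X" and mst: "minimum_spanning_tree X d T"
  shows "G \<subseteq> all_pairs X \<Longrightarrow> HS G X \<Longrightarrow> T \<subseteq> G \<Longrightarrow>
    \<exists>Ls. Ls \<noteq> [] \<and> hd Ls = G \<and> (\<forall>i < length Ls - 1. d_erasure X d (Ls ! i) (Ls ! (i + 1))) \<and> last Ls = T"
proof (induction "card (G - T)" arbitrary: G rule: less_induct)
  case less
  show ?case
  proof (cases "G = T")
    case True
    thus ?thesis by (intro exI[of _ "[T]"]) simp
  next
    case False
    obtain x y where xy: "expS G X x y" "{x, y} \<notin> T" and mx: "\<forall>u v. expS G X u v \<longrightarrow> d u v \<le> d x y"
      using P3[OF met fin mst less.prems(3,1,2) False] by blast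
    define H where "H = G - {{x, y}}"
    have de: "d_erasure X d G H" unfolding H_def using erasure_of[OF fin less.prems(1) xy(1) mx] .
    have HX: "H \<subseteq> all_pairs X" using less.prems(1) H_def by auto
    have hsH: "HS H X" unfolding H_def using HS_erase[OF fin less.prems(2) xy(1)] .
    have TH: "T \<subseteq> H" using less.prems(3) xy(2) H_def by auto
    have finG: "finite G" using finite_subset[OF less.prems(1) finite_all_pairs[OF fin]] .
    have "{x, y} \<in> G - T" using xy by (auto simp: expS_def)
    moreover have "finite (G - T)" using finG by simp
    ultimately have "card ((G - T) - {{x, y}}) < card (G - T)" by (meson card_Diff1_less)
    moreover have "H - T = (G - T) - {{x, y}}" unfolding H_def by blast
    ultimately have "card (H - T) < card (G - T)" by simp
    from less.hyps[OF this HX hsH TH] obtain Ls where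
      Ls: "Ls \<noteq> []" "hd Ls = H" "\<forall>i < length Ls - 1. d_erasure X d (Ls ! i) (Ls ! (i + 1))" "last Ls = T"
      by blast
    have "\<forall>i < length (G # Ls) - 1. d_erasure X d ((G # Ls) ! i) ((G # Ls) ! (i + 1))"
    proof (intro allI impI)
      fix i assume i: "i < length (G # Ls) - 1"
      show "d_erasure X d ((G # Ls) ! i) ((G # Ls) ! (i + 1))"
      proof (cases i)
        case 0 thus ?thesis using de Ls(1,2) by (simp add: hd_conv_nth)
      next
        case (Suc j)
        hence "j < length Ls - 1" using i by simp
        thus ?thesis using Ls(3) Suc by simp
      qed
    qed
    thus ?thesis using Ls by (intro exI[of _ "G # Ls"]) simp
  qed
qed

theorem corollary3p3:
  fixes X :: "'a set" and d :: "'a \<Rightarrow> 'a \<Rightarrow> real"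
  assumes "finite X" and "Metric_space X d"
  shows "(\<forall>Gs. maximal_erasure_sequence X d Gs \<longrightarrow> minimum_spanning_tree X d (last Gs))
       \<and> (\<forall>T. minimum_spanning_tree X d T \<longrightarrow>
              (\<exists>Gs. maximal_erasure_sequence X d Gs \<and> last Gs = T))"
proof (intro conjI allI impI)
  note fin = assms(1) and met = assms(2)
  fix Gs assume mes: "maximal_erasure_sequence X d Gs"
  have ne: "Gs \<noteq> []" and hd: "hd Gs = complete_graph X"
    and steps: "\<forall>i < length Gs - 1. d_erasure X d (Gs ! i) (Gs ! (i + 1))"
    and nomore: "\<not> (\<exists>H. d_erasure X d (last Gs) H)"
    using mes unfolding maximal_erasure_sequence_def erasure_sequence_def by auto
  have inv: "Gs ! i \<subseteq> all_pairs X \<and> HS (Gs ! i) X \<and> (\<exists>T. minimum_spanning_tree X d T \<and> T \<subseteq> Gs ! i)"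
    if "i < length Gs" for i
    using that
  proof (induction i)
    case 0
    have "Gs ! 0 = all_pairs X" using hd ne by (simp add: hd_conv_nth complete_graph_def)
    moreover obtain T where "minimum_spanning_tree X d T" using MST_exists[OF met fin] by blast
    moreover hence "T \<subseteq> all_pairs X"
      by (simp add: minimum_spanning_tree_def spanning_tree_def is_graph_on_def)
    ultimately show ?case using HS_complete[of X] by auto
  next
    case (Suc i)
    have IH: "Gs ! i \<subseteq> all_pairs X" "HS (Gs ! i) X" "\<exists>T. minimum_spanning_tree X d T \<and> T \<subseteq> Gs ! i"
      using Suc by auto
    have "d_erasure X d (Gs ! i) (Gs ! (i + 1))" using steps Suc.prems by auto
    then obtain x y where xy: "Gs ! (i + 1) = Gs ! i - {{x, y}}" "expS (Gs ! i) X x y"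
      and mx: "\<forall>u v. expS (Gs ! i) X u v \<longrightarrow> d u v \<le> d x y"
      using erasure_step[OF fin IH(1)] by blast
    obtain T where T: "minimum_spanning_tree X d T" "T \<subseteq> Gs ! i" using IH(3) by blast
    have "\<exists>T'. minimum_spanning_tree X d T' \<and> T' \<subseteq> Gs ! i - {{x, y}}"
      using P1[OF met fin T(1) T(2) IH(1) IH(2) xy(2) mx] .
    moreover have "HS (Gs ! i - {{x, y}}) X" using HS_erase[OF fin IH(2) xy(2)] .
    moreover have "Gs ! i - {{x, y}} \<subseteq> all_pairs X" using IH(1) by auto
    ultimately show ?case using xy(1) by simp
  qed
  define G where "G = last Gs"
  have "G = Gs ! (length Gs - 1)" unfolding G_def using ne by (simp add: last_conv_nth)
  hence iG: "G \<subseteq> all_pairs X" "HS G X" "\<exists>T. minimum_spanning_tree X d T \<and> T \<subseteq> G"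
    using inv[of "length Gs - 1"] ne by auto
  obtain T where T: "minimum_spanning_tree X d T" "T \<subseteq> G" using iG(3) by blast
  have nex: "\<forall>a b. \<not> expS G X a b"
  proof (intro allI notI)
    fix a b assume "expS G X a b"
    then obtain x y where "expS G X x y" "\<forall>u v. expS G X u v \<longrightarrow> d u v \<le> d x y"
      using max_exposed[OF fin] by metis
    hence "d_erasure X d G (G - {{x, y}})" using erasure_of[OF fin iG(1)] by blast
    thus False using nomore G_def by blast
  qed
  have con: "connected_graph X T" using T(1) by (simp add: minimum_spanning_tree_def spanning_tree_def)
  have "G = T" using final_eq[OF fin iG(1) iG(2) nex T(2) con] .
  thus "minimum_spanning_tree X d (last Gs)" using T(1) G_def by simp
next
  note fin = assms(1) and met = assms(2)
  fix T assume mst: "minimum_spanning_tree X d T"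
  have TX: "T \<subseteq> all_pairs X" and acy: "acyclic_graph T"
    using mst by (auto simp: minimum_spanning_tree_def spanning_tree_def is_graph_on_def)
  obtain Ls where Ls: "Ls \<noteq> []" "hd Ls = all_pairs X"
    "\<forall>i < length Ls - 1. d_erasure X d (Ls ! i) (Ls ! (i + 1))" "last Ls = T"
    using build[OF met fin mst subset_refl HS_complete TX] by blast
  have "\<not> (\<exists>H. d_erasure X d T H)"
  proof
    assume "\<exists>H. d_erasure X d T H"
    then obtain H where "d_erasure X d T H" by blast
    then obtain x y where "expS T X x y" using erasure_step[OF fin TX] by blast
    thus False using tree_noexp[OF acy] by blast
  qed
  thus "\<exists>Gs. maximal_erasure_sequence X d Gs \<and> last Gs = T"
    using Ls unfolding maximal_erasure_sequence_def erasure_sequence_def complete_graph_def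
    by (intro exI[of _ Ls]) auto
qed

end
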